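(* Let $L$ be an ideal lattice and let $f\colon(X,\sigma)\to(X',\sigma')$ be a morphism of support data on $L$, i.e. a continuous map $f\colon X\to X'$ with $\sigma(a)=f^{-1}(\sigma'(a))$ for all compact $a\in L$. If both $(X,\sigma)$ and $(X',\sigma')$ are classifying, then $f$ is a homeomorphism.
   Context: An ideal lattice is a poset $(L,\leq)$ with an associative multiplication such that: (L1) $L$ is a complete lattice; (L2) every element is a supremum of compact elements ($a$ is compact if $a\leq\sup A$ implies $a\leq\sup A'$ for some finite $A'\subseteq A$); (L3) multiplication distributes over binary joins on both sides; (L4) $1=\sup L$ is compact and is a two-sided identity; (L5) products of compact elements are compact. Semi-prime: $bb\leq a\Rightarrow b\leq a$. A support datum on $L$ is a pair $(X,\sigma)$ with $X$ a topological space and $\sigma$ assigning to each compact $a$ a closed subset $\sigma(a)\subseteq X$ with $\sigma(a\vee b)=\sigma(a)\cup\sigma(b)$, $\sigma(1)=X$, $\sigma(ab)=\sigma(a)\cap\sigma(b)$. It is classifying if $X$ is spectral (i.e. $T_0$, quasi-compact, quasi-compact opens closed under finite intersections and forming a basis, every non-empty irreducible closed set has a generic point) and the assignments $a\mapsto\bigcup_{b\leq a,\ b\text{ compact}}\sigma(b)$ and $Y\mapsto\bigvee_{b\text{ compact},\,\sigma(b)\subseteq Y}b$ induce mutually inverse bijections between the semi-prime elements of $L$ and the subsets $Y\subseteq X$ of the form $Y=\bigcup_i Y_i$ with each $X\setminus Y_i$ quasi-compact open. *)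

theory Defs
  imports "HOL-Analysis.Analysis"
begin

definition compact_elem :: "'l::complete_lattice \<Rightarrow> bool" where
  "compact_elem a \<longleftrightarrow>
     (\<forall>A. a \<le> Sup A \<longrightarrow> (\<exists>A'. finite A' \<and> A' \<subseteq> A \<and> a \<le> Sup A'))"

definition ideal_lattice :: "('l::complete_lattice \<Rightarrow> 'l \<Rightarrow> 'l) \<Rightarrow> bool" where
  "ideal_lattice m \<longleftrightarrow>
     (\<forall>a b c. m (m a b) c = m a (m b c)) \<and>
     (\<forall>a::'l. a = Sup {b. compact_elem b \<and> b \<le> a}) \<and>
     (\<forall>a b c. m a (sup b c) = sup (m a b) (m a c) \<and> m (sup b c) a = sup (m b a) (m c a)) \<and>
     compact_elem (top::'l) \<and> (\<forall>a. m top a = a \<and> m a top = a) \<and>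
     (\<forall>a b. compact_elem a \<longrightarrow> compact_elem b \<longrightarrow> compact_elem (m a b))"

definition semi_prime :: "('l::complete_lattice \<Rightarrow> 'l \<Rightarrow> 'l) \<Rightarrow> 'l \<Rightarrow> bool" where
  "semi_prime m a \<longleftrightarrow> (\<forall>b. m b b \<le> a \<longrightarrow> b \<le> a)"

definition support_datum ::
  "('l::complete_lattice \<Rightarrow> 'l \<Rightarrow> 'l) \<Rightarrow> 'a topology \<Rightarrow> ('l \<Rightarrow> 'a set) \<Rightarrow> bool" where
  "support_datum m X \<sigma> \<longleftrightarrow>
     (\<forall>a. compact_elem a \<longrightarrow> closedin X (\<sigma> a)) \<and>
     (\<forall>a b. compact_elem a \<longrightarrow> compact_elem b \<longrightarrow> \<sigma> (sup a b) = \<sigma> a \<union> \<sigma> b) \<and>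
     \<sigma> top = topspace X \<and>
     (\<forall>a b. compact_elem a \<longrightarrow> compact_elem b \<longrightarrow> \<sigma> (m a b) = \<sigma> a \<inter> \<sigma> b)"

definition irreducible_closed :: "'a topology \<Rightarrow> 'a set \<Rightarrow> bool" where
  "irreducible_closed X Z \<longleftrightarrow> closedin X Z \<and> Z \<noteq> {} \<and>
     (\<forall>Z1 Z2. closedin X Z1 \<longrightarrow> closedin X Z2 \<longrightarrow> Z = Z1 \<union> Z2 \<longrightarrow> Z = Z1 \<or> Z = Z2)"

definition spectral_space :: "'a topology \<Rightarrow> bool" where
  "spectral_space X \<longleftrightarrow>
     t0_space X \<and> compact_space X \<and>
     (\<forall>U V. openin X U \<longrightarrow> compactin X U \<longrightarrow> openin X V \<longrightarrow> compactin X V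
            \<longrightarrow> compactin X (U \<inter> V)) \<and>
     (\<forall>W x. openin X W \<longrightarrow> x \<in> W \<longrightarrow>
            (\<exists>U. openin X U \<and> compactin X U \<and> x \<in> U \<and> U \<subseteq> W)) \<and>
     (\<forall>Z. irreducible_closed X Z \<longrightarrow> (\<exists>x\<in>Z. X closure_of {x} = Z))"

definition thomason_subset :: "'a topology \<Rightarrow> 'a set \<Rightarrow> bool" where
  "thomason_subset X Y \<longleftrightarrow>
     (\<exists>F. (\<forall>Z\<in>F. Z \<subseteq> topspace X \<and> openin X (topspace X - Z) \<and> compactin X (topspace X - Z))
          \<and> Y = \<Union>F)"

definition supp_of_elem :: "('l::complete_lattice \<Rightarrow> 'a set) \<Rightarrow> 'l \<Rightarrow> 'a set" where
  "supp_of_elem \<sigma> a = \<Union>{\<sigma> b | b. b \<le> a \<and> compact_elem b}"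

definition elem_of_subset :: "('l::complete_lattice \<Rightarrow> 'a set) \<Rightarrow> 'a set \<Rightarrow> 'l" where
  "elem_of_subset \<sigma> Y = Sup {b. compact_elem b \<and> \<sigma> b \<subseteq> Y}"

definition classifying ::
  "('l::complete_lattice \<Rightarrow> 'l \<Rightarrow> 'l) \<Rightarrow> 'a topology \<Rightarrow> ('l \<Rightarrow> 'a set) \<Rightarrow> bool" where
  "classifying m X \<sigma> \<longleftrightarrow>
     spectral_space X \<and>
     (\<forall>a. semi_prime m a \<longrightarrow> thomason_subset X (supp_of_elem \<sigma> a)) \<and>
     (\<forall>Y. thomason_subset X Y \<longrightarrow> semi_prime m (elem_of_subset \<sigma> Y)) \<and>
     (\<forall>a. semi_prime m a \<longrightarrow> elem_of_subset \<sigma> (supp_of_elem \<sigma> a) = a) \<and>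
     (\<forall>Y. thomason_subset X Y \<longrightarrow> supp_of_elem \<sigma> (elem_of_subset \<sigma> Y) = Y)"

definition support_morphism ::
  "'a topology \<Rightarrow> ('l::complete_lattice \<Rightarrow> 'a set) \<Rightarrow> 'b topology \<Rightarrow> ('l \<Rightarrow> 'b set)
     \<Rightarrow> ('a \<Rightarrow> 'b) \<Rightarrow> bool" where
  "support_morphism X \<sigma> X' \<sigma>' f \<longleftrightarrow>
     continuous_map X X' f \<and>
     (\<forall>a. compact_elem a \<longrightarrow> \<sigma> a = {x \<in> topspace X. f x \<in> \<sigma>' a})"

end

theory Submission
  imports Defs
begin

definition qcc :: "'a topology \<Rightarrow> 'a set \<Rightarrow> bool" where
  "qcc X Z \<longleftrightarrow> Z \<subseteq> topspace X \<and> openin X (topspace X - Z) \<and> compactin X (topspace X - Z)"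

lemma thomason_iff: "thomason_subset X Y \<longleftrightarrow> (\<exists>F. (\<forall>Z\<in>F. qcc X Z) \<and> Y = \<Union>F)"
  unfolding thomason_subset_def qcc_def by blast

lemma thomason_obtain:
  assumes "thomason_subset X Y" obtains F where "\<forall>Z\<in>F. qcc X Z" "Y = \<Union>F"
  using assms unfolding thomason_iff by blast

lemma qcc_closed: "qcc X Z \<Longrightarrow> closedin X Z"
  unfolding qcc_def closedin_def by blast

lemma qcc_thomason: "qcc X Z \<Longrightarrow> thomason_subset X Z"
  unfolding thomason_iff by (rule exI[of _ "{Z}"]) auto

lemma thomason_sub: "thomason_subset X Y \<Longrightarrow> Y \<subseteq> topspace X"
  unfolding thomason_iff qcc_def by blast

lemma thomason_Union:
  assumes "\<forall>Y\<in>\<Y>. thomason_subset X Y" shows "thomason_subset X (\<Union>\<Y>)"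
proof -
  have "\<forall>Y\<in>\<Y>. \<exists>F. (\<forall>Z\<in>F. qcc X Z) \<and> Y = \<Union>F" using assms thomason_iff by blast
  then have "\<exists>g. \<forall>Y\<in>\<Y>. (\<forall>Z\<in>g Y. qcc X Z) \<and> Y = \<Union>(g Y)" by (rule bchoice)
  then obtain g where g: "\<forall>Y\<in>\<Y>. (\<forall>Z\<in>g Y. qcc X Z) \<and> Y = \<Union>(g Y)" by blast
  show ?thesis unfolding thomason_iff
  proof (rule exI[of _ "\<Union>(g ` \<Y>)"], intro conjI ballI)
    fix Z assume "Z \<in> \<Union>(g ` \<Y>)" then show "qcc X Z" using g by auto
  next
    show "\<Union>\<Y> = \<Union>(\<Union>(g ` \<Y>))"
    proof (rule set_eqI, rule iffI)
      fix x assume "x \<in> \<Union>\<Y>"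
      then obtain Y where Y: "Y \<in> \<Y>" "x \<in> Y" by blast
      then have "x \<in> \<Union>(g Y)" using g by blast
      then show "x \<in> \<Union>(\<Union>(g ` \<Y>))" using Y by blast
    next
      fix x assume "x \<in> \<Union>(\<Union>(g ` \<Y>))"
      then obtain Y Z where Y: "Y \<in> \<Y>" "Z \<in> g Y" "x \<in> Z" by blast
      then have "x \<in> Y" using g by blast
      then show "x \<in> \<Union>\<Y>" using Y by blast
    qed
  qed
qed

lemma qcc_Int: "qcc X A \<Longrightarrow> qcc X B \<Longrightarrow> qcc X (A \<inter> B)"
proof -
  assume a: "qcc X A" and b: "qcc X B"
  have e: "topspace X - (A \<inter> B) = (topspace X - A) \<union> (topspace X - B)" by blast
  show ?thesis unfolding qcc_def e
  proof (intro conjI)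
    show "A \<inter> B \<subseteq> topspace X" using a unfolding qcc_def by blast
    show "openin X ((topspace X - A) \<union> (topspace X - B))" using a b unfolding qcc_def by (intro openin_Un) simp_all
    show "compactin X ((topspace X - A) \<union> (topspace X - B))" using a b unfolding qcc_def by (intro compactin_Un) simp_all
  qed
qed

lemma qcc_top: "qcc X (topspace X)"
  unfolding qcc_def by auto

lemma spec_Int: "spectral_space X \<Longrightarrow> openin X U \<Longrightarrow> compactin X U \<Longrightarrow> openin X V \<Longrightarrow> compactin X V
   \<Longrightarrow> openin X (U \<inter> V) \<and> compactin X (U \<inter> V)"
  unfolding spectral_space_def by (simp add: openin_Int)

lemma qcc_Un: "spectral_space X \<Longrightarrow> qcc X A \<Longrightarrow> qcc X B \<Longrightarrow> qcc X (A \<union> B)"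
proof -
  assume s: "spectral_space X" and a: "qcc X A" and b: "qcc X B"
  have e: "topspace X - (A \<union> B) = (topspace X - A) \<inter> (topspace X - B)" by blast
  have "openin X ((topspace X - A) \<inter> (topspace X - B)) \<and> compactin X ((topspace X - A) \<inter> (topspace X - B))"
    using a b unfolding qcc_def by (intro spec_Int[OF s]) simp_all
  moreover have "A \<union> B \<subseteq> topspace X" using a b unfolding qcc_def by blast
  ultimately show ?thesis unfolding qcc_def e by blast
qed

lemma qcc_empty: "spectral_space X \<Longrightarrow> qcc X {}"
proof -
  assume "spectral_space X"
  then have "compact_space X" unfolding spectral_space_def by blast
  then show ?thesis unfolding qcc_def compact_space_def by simp
qed

lemma qcc_finite_Union:
  assumes s: "spectral_space X" and "finite F" shows "(\<forall>Z\<in>F. qcc X Z) \<Longrightarrow> qcc X (\<Union>F)"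
  using assms(2)
proof (induction F rule: finite_induct)
  case empty then show ?case using qcc_empty[OF s] by simp
next
  case (insert x F) then show ?case using qcc_Un[OF s] by simp
qed

lemma chain_finite_bound:
  assumes "finite F" "F \<noteq> {}" "F \<subseteq> C" "\<forall>A\<in>C. \<forall>B\<in>C. A \<subseteq> B \<or> B \<subseteq> A"
  shows "\<exists>G\<in>C. \<Union>F \<subseteq> G"
  using assms
proof (induction F rule: finite_ne_induct)
  case (singleton x) then show ?case by blast
next
  case (insert x F)
  then obtain G where G: "G \<in> C" "\<Union>F \<subseteq> G" by blast
  show ?case
  proof (cases "x \<subseteq> G")
    case True then show ?thesis using G by blast
  next
    case False then have "G \<subseteq> x" using insert G by blast
    then show ?thesis using G insert by blast
  qed
qed

lemma spectral_fip:
  assumes s: "spectral_space X"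
    and Zc: "\<forall>Z\<in>\<Z>. closedin X Z" and Zi: "\<forall>A\<in>\<Z>. \<forall>B\<in>\<Z>. A \<inter> B \<in> \<Z>" and Zt: "topspace X \<in> \<Z>"
    and Uc: "\<forall>U\<in>\<U>. openin X U \<and> compactin X U" and Ui: "\<forall>A\<in>\<U>. \<forall>B\<in>\<U>. A \<inter> B \<in> \<U>"
    and Ut: "topspace X \<in> \<U>"
    and ne: "\<forall>Z\<in>\<Z>. \<forall>U\<in>\<U>. Z \<inter> U \<noteq> {}"
  shows "\<exists>x\<in>topspace X. (\<forall>Z\<in>\<Z>. x \<in> Z) \<and> (\<forall>U\<in>\<U>. x \<in> U)"
proof -
  define FF where "FF = {W. closedin X W \<and> (\<forall>Z\<in>\<Z>. \<forall>U\<in>\<U>. W \<inter> Z \<inter> U \<noteq> {})}"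
  define GG where "GG = (\<lambda>W. topspace X - W) ` FF"
  have topFF: "topspace X \<in> FF" unfolding FF_def
  proof (intro CollectI conjI ballI closedin_topspace)
    fix Z U assume ZU: "Z \<in> \<Z>" "U \<in> \<U>"
    then have "Z \<subseteq> topspace X" using Zc closedin_subset by blast
    then have "topspace X \<inter> Z \<inter> U = Z \<inter> U" by blast
    then show "topspace X \<inter> Z \<inter> U \<noteq> {}" using ne ZU by simp
  qed
  have "\<exists>M\<in>GG. \<forall>G\<in>GG. M \<subseteq> G \<longrightarrow> G = M"
  proof (rule Zorn_Lemma, intro ballI)
    fix C assume C: "C \<in> chains GG"
    then have CG: "C \<subseteq> GG" and ch: "\<forall>A\<in>C. \<forall>B\<in>C. A \<subseteq> B \<or> B \<subseteq> A"
      unfolding chains_def chain_subset_def by auto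
    show "\<Union>C \<in> GG"
    proof (cases "C = {}")
      case True
      then show ?thesis unfolding GG_def using topFF by (auto intro!: image_eqI[of _ _ "topspace X"])
    next
      case False
      define W where "W = topspace X - \<Union>C"
      have Csub: "\<Union>C \<subseteq> topspace X" using CG unfolding GG_def by auto
      have Copen: "\<forall>G\<in>C. openin X G"
      proof
        fix G assume "G \<in> C"
        then obtain W' where "closedin X W'" "G = topspace X - W'" using CG unfolding GG_def FF_def by auto
        then show "openin X G" by (simp add: openin_diff)
      qed
      have Wc: "closedin X W" unfolding W_def using Copen by (auto intro: openin_Union)
      have "\<forall>Z\<in>\<Z>. \<forall>U\<in>\<U>. W \<inter> Z \<inter> U \<noteq> {}"
      proof (intro ballI notI)
        fix Z U assume Z: "Z \<in> \<Z>" and U: "U \<in> \<U>" and e: "W \<inter> Z \<inter> U = {}"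
        have cS: "compactin X (Z \<inter> U)" using Z U Zc Uc closed_Int_compactin by blast
        have "Z \<inter> U \<subseteq> \<Union>C" using e cS compactin_subset_topspace unfolding W_def by blast
        then obtain F where F: "finite F" "F \<subseteq> C" "Z \<inter> U \<subseteq> \<Union>F"
        proof -
          have "\<forall>\<U>. (\<forall>U\<in>\<U>. openin X U) \<and> Z \<inter> U \<subseteq> \<Union>\<U> \<longrightarrow>
                 (\<exists>F. finite F \<and> F \<subseteq> \<U> \<and> Z \<inter> U \<subseteq> \<Union>F)"
            using cS unfolding compactin_def by blast
          then show ?thesis using Copen \<open>Z \<inter> U \<subseteq> \<Union>C\<close> that by blast
        qed
        have "F \<noteq> {}" using F ne Z U by auto
        then obtain G where G: "G \<in> C" "\<Union>F \<subseteq> G" using chain_finite_bound[OF F(1) _ F(2) ch] by blast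
        then obtain W' where W': "W' \<in> FF" "G = topspace X - W'" using CG unfolding GG_def by auto
        have "W' \<inter> Z \<inter> U \<noteq> {}" using W' Z U unfolding FF_def by auto
        moreover have "Z \<inter> U \<subseteq> G" using F G by auto
        ultimately show False using W' by auto
      qed
      then have "W \<in> FF" unfolding FF_def using Wc by auto
      moreover have "\<Union>C = topspace X - W" unfolding W_def using Csub by auto
      ultimately show ?thesis unfolding GG_def by auto
    qed
  qed
  then obtain M where M: "M \<in> GG" "\<forall>G\<in>GG. M \<subseteq> G \<longrightarrow> G = M" by blast
  define W where "W = topspace X - M"
  have WF: "W \<in> FF" using M unfolding W_def GG_def FF_def
    by (auto simp: closedin_def Diff_Diff_Int inf.absorb2)
  have Wc: "closedin X W" using WF unfolding FF_def by auto
  have min: "\<forall>W'\<in>FF. W' \<subseteq> W \<longrightarrow> W' = W"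
  proof (intro ballI impI)
    fix W' assume W': "W' \<in> FF" "W' \<subseteq> W"
    have "topspace X - W' \<in> GG" using W' unfolding GG_def by auto
    moreover have "M \<subseteq> topspace X - W'" using W' M unfolding W_def GG_def by auto
    ultimately have "topspace X - W' = M" using M by auto
    moreover have "W' \<subseteq> topspace X" using W' unfolding FF_def by (auto dest: closedin_subset)
    ultimately show "W' = W" unfolding W_def by auto
  qed
  have WZ: "W \<subseteq> Z" if Z: "Z \<in> \<Z>" for Z
  proof -
    have "W \<inter> Z \<in> FF" unfolding FF_def
    proof (intro CollectI conjI ballI)
      show "closedin X (W \<inter> Z)" using Wc Z Zc by auto
      fix Z2 U assume "Z2 \<in> \<Z>" "U \<in> \<U>"
      then have "W \<inter> (Z \<inter> Z2) \<inter> U \<noteq> {}" using WF Zi Z unfolding FF_def by auto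
      then show "W \<inter> Z \<inter> Z2 \<inter> U \<noteq> {}" by (simp add: Int_assoc)
    qed
    then show ?thesis using min by blast
  qed
  have Wne: "W \<noteq> {}" using WF Zt Ut unfolding FF_def by auto
  have irr: "irreducible_closed X W" unfolding irreducible_closed_def
  proof (intro conjI allI impI Wc Wne)
    fix W1 W2 assume c1: "closedin X W1" and c2: "closedin X W2" and e: "W = W1 \<union> W2"
    show "W = W1 \<or> W = W2"
    proof (rule ccontr)
      assume "\<not> (W = W1 \<or> W = W2)"
      then have "W1 \<notin> FF" "W2 \<notin> FF" using min e by auto
      then obtain Z1 U1 Z2 U2 where "Z1 \<in> \<Z>" "U1 \<in> \<U>" "W1 \<inter> Z1 \<inter> U1 = {}"
         "Z2 \<in> \<Z>" "U2 \<in> \<U>" "W2 \<inter> Z2 \<inter> U2 = {}"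
        using c1 c2 unfolding FF_def by auto
      moreover have "W \<inter> (Z1 \<inter> Z2) \<inter> (U1 \<inter> U2) \<noteq> {}"
        using WF calculation Zi Ui unfolding FF_def by auto
      ultimately show False using e by auto
    qed
  qed
  then obtain x where x: "x \<in> W" "X closure_of {x} = W" using s unfolding spectral_space_def by blast
  have xt: "x \<in> topspace X" using x Wc closedin_subset by blast
  show ?thesis
  proof (intro bexI[OF _ xt] conjI ballI)
    fix Z assume "Z \<in> \<Z>" then show "x \<in> Z" using WZ x by auto
  next
    fix U assume U: "U \<in> \<U>"
    show "x \<in> U"
    proof (rule ccontr)
      assume "x \<notin> U"
      then have "X closure_of {x} \<subseteq> topspace X - U"
        using xt U Uc by (intro closure_of_minimal) auto
      then have "W \<inter> topspace X \<inter> U = {}" using x by auto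
      then show False using WF Zt U unfolding FF_def by auto
    qed
  qed
qed

lemma spectral_dual_compact:
  assumes s: "spectral_space X" and Z: "qcc X Z" and Y: "\<forall>Y\<in>\<Y>. qcc X Y" and cov: "Z \<subseteq> \<Union>\<Y>"
  shows "\<exists>\<Y>0. finite \<Y>0 \<and> \<Y>0 \<subseteq> \<Y> \<and> Z \<subseteq> \<Union>\<Y>0"
proof (rule ccontr)
  assume nf: "\<not> ?thesis"
  define UU where "UU = {topspace X - \<Union>F | F. finite F \<and> F \<subseteq> \<Y>}"
  have Zs: "Z \<subseteq> topspace X" using Z unfolding qcc_def by auto
  have "\<exists>x\<in>topspace X. (\<forall>Z'\<in>{Z, topspace X}. x \<in> Z') \<and> (\<forall>U\<in>UU. x \<in> U)"
  proof (rule spectral_fip[OF s])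
    show "\<forall>Z'\<in>{Z, topspace X}. closedin X Z'" using qcc_closed[OF Z] by auto
    show "\<forall>A\<in>{Z, topspace X}. \<forall>B\<in>{Z, topspace X}. A \<inter> B \<in> {Z, topspace X}" using Zs by auto
    show "topspace X \<in> {Z, topspace X}" by simp
    show "\<forall>U\<in>UU. openin X U \<and> compactin X U"
    proof
      fix U assume "U \<in> UU"
      then obtain F where F: "finite F" "F \<subseteq> \<Y>" "U = topspace X - \<Union>F" unfolding UU_def by auto
      have "qcc X (\<Union>F)" using qcc_finite_Union[OF s F(1)] F Y by auto
      then show "openin X U \<and> compactin X U" unfolding qcc_def F(3) by auto
    qed
    show "\<forall>A\<in>UU. \<forall>B\<in>UU. A \<inter> B \<in> UU"
    proof (intro ballI)
      fix A B assume "A \<in> UU" "B \<in> UU"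
      then obtain F1 F2 where "finite F1" "F1 \<subseteq> \<Y>" "A = topspace X - \<Union>F1"
        "finite F2" "F2 \<subseteq> \<Y>" "B = topspace X - \<Union>F2" unfolding UU_def by auto
      then show "A \<inter> B \<in> UU" unfolding UU_def
        by (intro CollectI exI[of _ "F1 \<union> F2"]) auto
    qed
    show "topspace X \<in> UU" unfolding UU_def by (intro CollectI exI[of _ "{}"]) auto
    show "\<forall>Z'\<in>{Z, topspace X}. \<forall>U\<in>UU. Z' \<inter> U \<noteq> {}"
    proof (intro ballI)
      fix Z' U assume Z': "Z' \<in> {Z, topspace X}" and U: "U \<in> UU"
      then obtain F where F: "finite F" "F \<subseteq> \<Y>" "U = topspace X - \<Union>F" unfolding UU_def by auto
      have "\<not> Z \<subseteq> \<Union>F" using nf F by blast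
      then show "Z' \<inter> U \<noteq> {}" using Z' F Zs by auto
    qed
  qed
  then obtain x where x: "x \<in> Z" "\<forall>U\<in>UU. x \<in> U" by auto
  obtain Y0 where "Y0 \<in> \<Y>" "x \<in> Y0" using x cov by auto
  moreover have "topspace X - \<Union>{Y0} \<in> UU" unfolding UU_def using calculation by blast
  ultimately show False using x by auto
qed

lemma spec_basis: "spectral_space X \<Longrightarrow> openin X W \<Longrightarrow> x \<in> W \<Longrightarrow>
   \<exists>U. openin X U \<and> compactin X U \<and> x \<in> U \<and> U \<subseteq> W"
  unfolding spectral_space_def by blast

lemma spec_t0: "spectral_space X \<Longrightarrow> t0_space X"
  unfolding spectral_space_def by blast

lemma spec_cpt: "spectral_space X \<Longrightarrow> compactin X (topspace X)"
  unfolding spectral_space_def compact_space_def by blast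

lemma qcc_compl: "openin X U \<Longrightarrow> compactin X U \<Longrightarrow> qcc X (topspace X - U)"
proof -
  assume "openin X U" "compactin X U"
  moreover then have "topspace X - (topspace X - U) = U" using openin_subset by blast
  ultimately show ?thesis unfolding qcc_def by simp
qed

theorem mainTheorem10:
  fixes m :: "'l::complete_lattice \<Rightarrow> 'l \<Rightarrow> 'l"
    and X :: "'a topology" and \<sigma> :: "'l \<Rightarrow> 'a set"
    and X' :: "'b topology" and \<sigma>' :: "'l \<Rightarrow> 'b set"
    and f :: "'a \<Rightarrow> 'b"
  assumes "ideal_lattice m"
    and "support_datum m X \<sigma>" and "support_datum m X' \<sigma>'"
    and "support_morphism X \<sigma> X' \<sigma>' f"
    and "classifying m X \<sigma>" and "classifying m X' \<sigma>'"
  shows "homeomorphic_map X X' f"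
proof -
  have sX: "spectral_space X" and cX1: "\<And>a. semi_prime m a \<Longrightarrow> thomason_subset X (supp_of_elem \<sigma> a)"
    and cX2: "\<And>Y. thomason_subset X Y \<Longrightarrow> semi_prime m (elem_of_subset \<sigma> Y)"
    and cX3: "\<And>a. semi_prime m a \<Longrightarrow> elem_of_subset \<sigma> (supp_of_elem \<sigma> a) = a"
    and cX4: "\<And>Y. thomason_subset X Y \<Longrightarrow> supp_of_elem \<sigma> (elem_of_subset \<sigma> Y) = Y"
    using assms(5) unfolding classifying_def by blast+
  have sX': "spectral_space X'" and cY1: "\<And>a. semi_prime m a \<Longrightarrow> thomason_subset X' (supp_of_elem \<sigma>' a)"
    and cY2: "\<And>Y. thomason_subset X' Y \<Longrightarrow> semi_prime m (elem_of_subset \<sigma>' Y)"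
    and cY3: "\<And>a. semi_prime m a \<Longrightarrow> elem_of_subset \<sigma>' (supp_of_elem \<sigma>' a) = a"
    and cY4: "\<And>Y. thomason_subset X' Y \<Longrightarrow> supp_of_elem \<sigma>' (elem_of_subset \<sigma>' Y) = Y"
    using assms(6) unfolding classifying_def by blast+
  have cont: "continuous_map X X' f"
    and mor: "\<And>a. compact_elem a \<Longrightarrow> \<sigma> a = {x \<in> topspace X. f x \<in> \<sigma>' a}"
    using assms(4) unfolding support_morphism_def by blast+
  define pre where "pre = (\<lambda>Y. {x \<in> topspace X. f x \<in> Y})"
  have fT: "\<And>x. x \<in> topspace X \<Longrightarrow> f x \<in> topspace X'"
    using continuous_map_image_subset_topspace[OF cont] by blast
  have supp: "supp_of_elem \<sigma> a = pre (supp_of_elem \<sigma>' a)" for a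
  proof (rule set_eqI)
    fix x
    show "x \<in> supp_of_elem \<sigma> a \<longleftrightarrow> x \<in> pre (supp_of_elem \<sigma>' a)"
    proof
      assume "x \<in> supp_of_elem \<sigma> a"
      then obtain b where b: "b \<le> a" "compact_elem b" "x \<in> \<sigma> b" unfolding supp_of_elem_def by blast
      then have "x \<in> topspace X" "f x \<in> \<sigma>' b" using mor[OF b(2)] by blast+
      then show "x \<in> pre (supp_of_elem \<sigma>' a)" unfolding pre_def supp_of_elem_def using b by blast
    next
      assume "x \<in> pre (supp_of_elem \<sigma>' a)"
      then obtain b where b: "b \<le> a" "compact_elem b" "f x \<in> \<sigma>' b" "x \<in> topspace X"
        unfolding pre_def supp_of_elem_def by blast
      then have "x \<in> \<sigma> b" using mor[OF b(2)] by blast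
      then show "x \<in> supp_of_elem \<sigma> a" unfolding supp_of_elem_def using b by blast
    qed
  qed
  have T1: "thomason_subset X (pre Y')" if "thomason_subset X' Y'" for Y'
  proof -
    have "Y' = supp_of_elem \<sigma>' (elem_of_subset \<sigma>' Y')" using cY4 that by simp
    then have "pre Y' = supp_of_elem \<sigma> (elem_of_subset \<sigma>' Y')" using supp by simp
    then show ?thesis using cX1 cY2 that by simp
  qed
  have T2: "\<exists>Y'. thomason_subset X' Y' \<and> pre Y' = Y" if "thomason_subset X Y" for Y
  proof -
    have "Y = supp_of_elem \<sigma> (elem_of_subset \<sigma> Y)" using cX4 that by simp
    then have "Y = pre (supp_of_elem \<sigma>' (elem_of_subset \<sigma> Y))" using supp by simp
    then show ?thesis using cY1 cX2 that by blast
  qed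
  have T3: "Y1 = Y2" if "thomason_subset X' Y1" "thomason_subset X' Y2" "pre Y1 = pre Y2" for Y1 Y2
  proof -
    define a1 where "a1 = elem_of_subset \<sigma>' Y1"
    define a2 where "a2 = elem_of_subset \<sigma>' Y2"
    have e1: "Y1 = supp_of_elem \<sigma>' a1" "Y2 = supp_of_elem \<sigma>' a2" using cY4 that unfolding a1_def a2_def by simp_all
    have sp: "semi_prime m a1" "semi_prime m a2" using cY2 that unfolding a1_def a2_def by simp_all
    have "supp_of_elem \<sigma> a1 = pre Y1" "supp_of_elem \<sigma> a2 = pre Y2" using supp e1 by simp_all
    then have "supp_of_elem \<sigma> a1 = supp_of_elem \<sigma> a2" using that(3) by simp
    moreover have "a1 = elem_of_subset \<sigma> (supp_of_elem \<sigma> a1)" "a2 = elem_of_subset \<sigma> (supp_of_elem \<sigma> a2)"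
      using cX3 sp by simp_all
    ultimately have "a1 = a2" by simp
    then show ?thesis using e1 by simp
  qed
  have T3': "Y1 \<subseteq> Y2" if "thomason_subset X' Y1" "thomason_subset X' Y2" "pre Y1 \<subseteq> pre Y2" for Y1 Y2
  proof -
    have "thomason_subset X' (\<Union>{Y1, Y2})" using that by (intro thomason_Union) blast
    moreover have "pre (\<Union>{Y1, Y2}) = pre Y2" using that(3) unfolding pre_def by blast
    ultimately have "\<Union>{Y1, Y2} = Y2" using T3 that(2) by blast
    then show ?thesis by blast
  qed
  have sep: "f u \<noteq> f v" if uv: "u \<in> topspace X" "v \<in> topspace X" "openin X U" "u \<in> U" "v \<notin> U" for u v U
  proof -
    obtain V where V: "openin X V" "compactin X V" "u \<in> V" "V \<subseteq> U" using spec_basis[OF sX uv(3,4)] by blast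
    have "thomason_subset X (topspace X - V)" using qcc_thomason[OF qcc_compl[OF V(1,2)]] .
    then obtain Y' where Y': "thomason_subset X' Y'" "pre Y' = topspace X - V" using T2[of "topspace X - V"] by blast
    have "v \<in> pre Y'" "u \<notin> pre Y'" using Y' uv V by blast+
    then show ?thesis unfolding pre_def using uv by auto
  qed
  have inj: "inj_on f (topspace X)"
  proof (rule inj_onI, rule ccontr)
    fix x y assume xy: "x \<in> topspace X" "y \<in> topspace X" "f x = f y" "x \<noteq> y"
    then obtain U where U: "openin X U" "x \<notin> U \<longleftrightarrow> y \<in> U" using spec_t0[OF sX] unfolding t0_space_def by blast
    show False
    proof (cases "y \<in> U")
      case True then show False using sep[of y x U] xy U by auto
    next
      case False then show False using sep[of x y U] xy U by auto
    qed
  qed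
  have preqc: "openin X (pre U') \<and> compactin X (pre U')" if U': "openin X' U'" "compactin X' U'" for U'
  proof -
    define Z' where "Z' = topspace X' - U'"
    have qZ': "qcc X' Z'" unfolding Z'_def using qcc_compl U' by blast
    have "thomason_subset X (pre Z')" using T1[OF qcc_thomason[OF qZ']] .
    then obtain F where F: "\<forall>Z\<in>F. qcc X Z" "pre Z' = \<Union>F" by (rule thomason_obtain)
    define YY where "YY = {Y. qcc X' Y \<and> (\<exists>Z\<in>F. pre Y \<subseteq> Z)}"
    have thYY: "thomason_subset X' (\<Union>YY)" unfolding YY_def by (intro thomason_Union) (blast intro: qcc_thomason)
    have "pre Z' \<subseteq> pre (\<Union>YY)"
    proof
      fix x assume "x \<in> pre Z'"
      then obtain Z where Z: "Z \<in> F" "x \<in> Z" using F by blast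
      then have "thomason_subset X Z" using F(1) by (simp add: qcc_thomason)
      then obtain Y0 where Y0: "thomason_subset X' Y0" "pre Y0 = Z" using T2[of Z] by blast
      from Y0(1) obtain H where H: "\<forall>Y\<in>H. qcc X' Y" "Y0 = \<Union>H" by (rule thomason_obtain)
      have xT: "x \<in> topspace X" "f x \<in> Y0" using Y0 Z unfolding pre_def by blast+
      then obtain Y where Y: "Y \<in> H" "f x \<in> Y" using H by blast
      have "pre Y \<subseteq> Z" using Y H Y0 unfolding pre_def by blast
      then have "Y \<in> YY" unfolding YY_def using Y H Z by blast
      then show "x \<in> pre (\<Union>YY)" using Y xT unfolding pre_def by blast
    qed
    then have "Z' \<subseteq> \<Union>YY" using T3'[OF qcc_thomason[OF qZ'] thYY] by blast
    then obtain YY0 where YY0: "finite YY0" "YY0 \<subseteq> YY" "Z' \<subseteq> \<Union>YY0"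
      using spectral_dual_compact[OF sX' qZ', of YY] unfolding YY_def by blast
    have "\<forall>Y\<in>YY0. \<exists>Z. Z \<in> F \<and> pre Y \<subseteq> Z" using YY0 unfolding YY_def by blast
    then have "\<exists>k. \<forall>Y\<in>YY0. k Y \<in> F \<and> pre Y \<subseteq> k Y" by (rule bchoice)
    then obtain k where k: "\<forall>Y\<in>YY0. k Y \<in> F \<and> pre Y \<subseteq> k Y" by blast
    have "pre Z' = \<Union>(k ` YY0)"
    proof
      show "pre Z' \<subseteq> \<Union>(k ` YY0)"
      proof
        fix x assume "x \<in> pre Z'"
        then obtain Y where "Y \<in> YY0" "f x \<in> Y" "x \<in> topspace X" using YY0 unfolding pre_def by blast
        then show "x \<in> \<Union>(k ` YY0)" using k unfolding pre_def by blast
      qed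
      show "\<Union>(k ` YY0) \<subseteq> pre Z'" using k F by blast
    qed
    moreover have "qcc X (\<Union>(k ` YY0))" using qcc_finite_Union[OF sX] YY0(1) k F by blast
    ultimately have qp: "qcc X (pre Z')" by simp
    have "pre U' = topspace X - pre Z'" unfolding pre_def Z'_def using fT U' openin_subset by blast
    then show ?thesis using qp unfolding qcc_def by simp
  qed
  have surj: "f ` topspace X = topspace X'"
  proof
    show "f ` topspace X \<subseteq> topspace X'" using fT by blast
    show "topspace X' \<subseteq> f ` topspace X"
    proof
      fix y assume y: "y \<in> topspace X'"
      define ZZ where "ZZ = {pre Z' | Z'. qcc X' Z' \<and> y \<in> Z'}"
      define UU where "UU = {pre U' | U'. openin X' U' \<and> compactin X' U' \<and> y \<in> U'}"
      have preT: "pre (topspace X') = topspace X" unfolding pre_def using fT by blast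
      have preI: "pre A \<inter> pre B = pre (A \<inter> B)" for A B unfolding pre_def by blast
      have "\<exists>x\<in>topspace X. (\<forall>Z\<in>ZZ. x \<in> Z) \<and> (\<forall>U\<in>UU. x \<in> U)"
      proof (rule spectral_fip[OF sX])
        show "\<forall>Z\<in>ZZ. closedin X Z"
        proof
          fix Z assume "Z \<in> ZZ"
          then obtain Z' where "qcc X' Z'" "Z = pre Z'" unfolding ZZ_def by blast
          then show "closedin X Z" unfolding pre_def
            using closedin_continuous_map_preimage[OF cont qcc_closed] by simp
        qed
        show "\<forall>A\<in>ZZ. \<forall>B\<in>ZZ. A \<inter> B \<in> ZZ"
        proof (intro ballI)
          fix A B assume "A \<in> ZZ" "B \<in> ZZ"
          then obtain A' B' where "qcc X' A'" "y \<in> A'" "A = pre A'" "qcc X' B'" "y \<in> B'" "B = pre B'"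
            unfolding ZZ_def by blast
          moreover have "A \<inter> B = pre (A' \<inter> B')" using calculation preI by simp
          ultimately show "A \<inter> B \<in> ZZ" unfolding ZZ_def using qcc_Int[of X' A' B'] by blast
        qed
        show "topspace X \<in> ZZ" unfolding ZZ_def
          by (rule CollectI, rule exI[of _ "topspace X'"]) (simp add: preT qcc_top y)
        show "\<forall>U\<in>UU. openin X U \<and> compactin X U"
        proof
          fix U assume "U \<in> UU"
          then obtain U' where "openin X' U'" "compactin X' U'" "U = pre U'" unfolding UU_def by blast
          then show "openin X U \<and> compactin X U" using preqc by simp
        qed
        show "\<forall>A\<in>UU. \<forall>B\<in>UU. A \<inter> B \<in> UU"
        proof (intro ballI)
          fix A B assume "A \<in> UU" "B \<in> UU"
          then obtain A' B' where AB: "openin X' A'" "compactin X' A'" "y \<in> A'" "A = pre A'"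
            "openin X' B'" "compactin X' B'" "y \<in> B'" "B = pre B'"
            unfolding UU_def by blast
          then have "openin X' (A' \<inter> B') \<and> compactin X' (A' \<inter> B')" using spec_Int[OF sX'] by blast
          moreover have "A \<inter> B = pre (A' \<inter> B')" using AB preI by simp
          ultimately show "A \<inter> B \<in> UU" unfolding UU_def using AB by blast
        qed
        show "topspace X \<in> UU" unfolding UU_def
          by (rule CollectI, rule exI[of _ "topspace X'"]) (simp add: preT spec_cpt[OF sX'] y)
        show "\<forall>Z\<in>ZZ. \<forall>U\<in>UU. Z \<inter> U \<noteq> {}"
        proof (intro ballI)
          fix Z U assume "Z \<in> ZZ" "U \<in> UU"
          then obtain Z' U' where ZU: "qcc X' Z'" "y \<in> Z'" "Z = pre Z'" "openin X' U'" "compactin X' U'" "y \<in> U'" "U = pre U'"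
            unfolding ZZ_def UU_def by blast
          define Y2 where "Y2 = Z' \<inter> (topspace X' - U')"
          have q2: "qcc X' Y2" unfolding Y2_def using qcc_Int[OF ZU(1) qcc_compl[OF ZU(4,5)]] .
          have "Z' \<noteq> Y2" unfolding Y2_def using ZU by blast
          then have "pre Z' \<noteq> pre Y2" using T3[OF qcc_thomason[OF ZU(1)] qcc_thomason[OF q2]] by blast
          then obtain x where "x \<in> topspace X" "f x \<in> Z'" "f x \<notin> Y2" unfolding pre_def Y2_def by blast
          then have "x \<in> Z \<inter> U" using ZU fT unfolding Y2_def pre_def by blast
          then show "Z \<inter> U \<noteq> {}" by blast
        qed
      qed
      then obtain x where x: "x \<in> topspace X" "\<forall>Z\<in>ZZ. x \<in> Z" "\<forall>U\<in>UU. x \<in> U" by blast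
      have t0': "\<forall>a\<in>topspace X'. \<forall>b\<in>topspace X'. a \<noteq> b \<longrightarrow> (\<exists>U. openin X' U \<and> (a \<notin> U \<longleftrightarrow> b \<in> U))"
        using spec_t0[OF sX'] unfolding t0_space_def .
      have "f x = y"
      proof (rule ccontr)
        assume ne: "f x \<noteq> y"
        have "\<exists>U. openin X' U \<and> (f x \<notin> U \<longleftrightarrow> y \<in> U)"
          using mp[OF bspec[OF bspec[OF t0' fT[OF x(1)]] y] ne] .
        then obtain U where U1: "openin X' U" and U2: "f x \<notin> U \<longleftrightarrow> y \<in> U" by blast
        show False
        proof (cases "y \<in> U")
          case True
          then have nfx: "f x \<notin> U" using U2 by simp
          obtain V where V: "openin X' V" "compactin X' V" "y \<in> V" "V \<subseteq> U"
            using spec_basis[OF sX' U1 True] by blast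
          have "pre V \<in> UU" unfolding UU_def using V by blast
          then have "x \<in> pre V" using x(3) by blast
          then have "f x \<in> V" unfolding pre_def by simp
          then show False using V(4) nfx by blast
        next
          case False
          then have fxU: "f x \<in> U" using U2 by simp
          obtain V where V: "openin X' V" "compactin X' V" "f x \<in> V" "V \<subseteq> U"
            using spec_basis[OF sX' U1 fxU] by blast
          have yV: "y \<in> topspace X' - V" using False V(4) y by blast
          have "pre (topspace X' - V) \<in> ZZ" unfolding ZZ_def using qcc_compl[OF V(1,2)] yV by blast
          then have "x \<in> pre (topspace X' - V)" using x(2) by blast
          then have "f x \<in> topspace X' - V" unfolding pre_def by simp
          then show False using V(3) by blast
        qed
      qed
      then show "y \<in> f ` topspace X" using x by blast
    qed
  qed
  have openqc: "openin X' (f ` W)" if W: "openin X W" "compactin X W" for W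
  proof -
    have "thomason_subset X (topspace X - W)" using qcc_thomason[OF qcc_compl[OF W]] .
    then obtain Y' where Y': "thomason_subset X' Y'" "pre Y' = topspace X - W" using T2[of "topspace X - W"] by blast
    from Y'(1) obtain F' where F': "\<forall>Z\<in>F'. qcc X' Z" "Y' = \<Union>F'" by (rule thomason_obtain)
    define YY where "YY = {Y. qcc X Y \<and> (\<exists>Z'\<in>F'. Y \<subseteq> pre Z')}"
    have "topspace X - W \<subseteq> \<Union>YY"
    proof
      fix x assume "x \<in> topspace X - W"
      then have x: "x \<in> topspace X" "f x \<in> Y'" using Y' unfolding pre_def by blast+
      then obtain Z' where Z': "Z' \<in> F'" "f x \<in> Z'" using F' by blast
      then have "qcc X' Z'" using F'(1) by blast
      then have "thomason_subset X (pre Z')" using T1[OF qcc_thomason] by blast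
      then obtain H where H: "\<forall>Y\<in>H. qcc X Y" "pre Z' = \<Union>H" by (rule thomason_obtain)
      have "x \<in> pre Z'" using x Z' unfolding pre_def by blast
      then obtain Y where "Y \<in> H" "x \<in> Y" using H by blast
      moreover then have "Y \<in> YY" unfolding YY_def using H Z' by blast
      ultimately show "x \<in> \<Union>YY" by blast
    qed
    then obtain YY0 where YY0: "finite YY0" "YY0 \<subseteq> YY" "topspace X - W \<subseteq> \<Union>YY0"
      using spectral_dual_compact[OF sX qcc_compl[OF W], of YY] unfolding YY_def by blast
    have "\<forall>Y\<in>YY0. \<exists>Z'. Z' \<in> F' \<and> Y \<subseteq> pre Z'" using YY0 unfolding YY_def by blast
    then have "\<exists>k. \<forall>Y\<in>YY0. k Y \<in> F' \<and> Y \<subseteq> pre (k Y)" by (rule bchoice)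
    then obtain k where k: "\<forall>Y\<in>YY0. k Y \<in> F' \<and> Y \<subseteq> pre (k Y)" by blast
    have th0: "thomason_subset X' (\<Union>(k ` YY0))" using k F' by (intro thomason_Union) (blast intro: qcc_thomason)
    have "pre Y' \<subseteq> pre (\<Union>(k ` YY0))"
    proof
      fix x assume "x \<in> pre Y'"
      then obtain Y where "Y \<in> YY0" "x \<in> Y" using Y' YY0 by blast
      then show "x \<in> pre (\<Union>(k ` YY0))" using k unfolding pre_def by blast
    qed
    then have "Y' \<subseteq> \<Union>(k ` YY0)" using T3'[OF Y'(1) th0] by blast
    moreover have "\<Union>(k ` YY0) \<subseteq> Y'" using k F' by blast
    ultimately have "Y' = \<Union>(k ` YY0)" by blast
    moreover have "qcc X' (\<Union>(k ` YY0))" using qcc_finite_Union[OF sX'] YY0(1) k F' by blast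
    ultimately have qY: "qcc X' Y'" by simp
    have "f ` W = topspace X' - Y'"
    proof
      show "f ` W \<subseteq> topspace X' - Y'"
      proof
        fix z assume "z \<in> f ` W"
        then obtain x where x: "x \<in> W" "z = f x" by blast
        then have "x \<in> topspace X" using W openin_subset by blast
        then show "z \<in> topspace X' - Y'" using x Y'(2) fT unfolding pre_def by blast
      qed
      show "topspace X' - Y' \<subseteq> f ` W"
      proof
        fix z assume z: "z \<in> topspace X' - Y'"
        then obtain x where x: "x \<in> topspace X" "z = f x" using surj by blast
        then have "x \<in> W" using z Y'(2) unfolding pre_def by blast
        then show "z \<in> f ` W" using x by blast
      qed
    qed
    then show ?thesis using qY unfolding qcc_def by simp
  qed
  have om: "open_map X X' f" unfolding open_map_def
  proof (intro allI impI)
    fix V assume V: "openin X V"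
    define WW where "WW = {W. openin X W \<and> compactin X W \<and> W \<subseteq> V}"
    have "V = \<Union>WW"
    proof
      show "V \<subseteq> \<Union>WW"
      proof
        fix x assume "x \<in> V"
        then obtain W where "openin X W" "compactin X W" "x \<in> W" "W \<subseteq> V" using spec_basis[OF sX V] by blast
        then show "x \<in> \<Union>WW" unfolding WW_def by blast
      qed
      show "\<Union>WW \<subseteq> V" unfolding WW_def by blast
    qed
    then have "f ` V = \<Union>((\<lambda>W. f ` W) ` WW)" by blast
    moreover have "openin X' (\<Union>((\<lambda>W. f ` W) ` WW))"
      using openqc unfolding WW_def by (intro openin_Union) blast
    ultimately show "openin X' (f ` V)" by simp
  qed
  show ?thesis using bijective_open_imp_homeomorphic_map[OF cont om surj inj] .
qed

end
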